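(* Let $\mathcal S=\{d_1,\dots,d_k\}\subset\mathbb R^n$ be a positive spanning set of unit vectors and let $u^*$ be a cosine vector of $\mathcal S$. Then there exists a basis $\mathcal B\subset\mathcal S$ of $\mathbb R^n$ such that $u^*$ is the Gram vector of $\mathcal B$ with Gram value equal to $\operatorname{cm}(\mathcal S)$.
   Context: A finite set is positive spanning if its positive span $\{\sum\lambda_id_i:\lambda_i\ge0\}$ is $\mathbb R^n$. The cosine measure is $\operatorname{cm}(\mathcal S)=\min_{\|u\|=1}\max_{d\in\mathcal S}\frac{d^\top u}{\|d\|}$ and its minimizers are cosine vectors. For a basis $\mathcal B=\{b_1,\dots,b_n\}$ of $\mathbb R^n$, a Gram vector of $\mathcal B$ with Gram value $\gamma$ is a unit vector $u$ with $u^\top b_i=\gamma>0$ for all $i$. *)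

theory Defs
  imports "HOL-Analysis.Analysis"
begin

definition pos_span :: "'a::euclidean_space set \<Rightarrow> 'a set" where
  "pos_span S = {y. \<exists>c. (\<forall>d\<in>S. c d \<ge> 0) \<and> y = (\<Sum>d\<in>S. c d *\<^sub>R d)}"

definition positive_spanning :: "'a::euclidean_space set \<Rightarrow> bool" where
  "positive_spanning S \<longleftrightarrow> finite S \<and> pos_span S = UNIV"

definition cm_val :: "'a::euclidean_space set \<Rightarrow> 'a \<Rightarrow> real" where
  "cm_val S u = Max ((\<lambda>d. (d \<bullet> u) / norm d) ` S)"

text \<open>Cosine measure: minimum over unit vectors u of cm_val S u (the minimum is
  attained for a finite nonempty set, so the infimum equals the minimum).\<close>
definition cosine_measure :: "'a::euclidean_space set \<Rightarrow> real" where
  "cosine_measure S = (INF u\<in>{u. norm u = 1}. cm_val S u)"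

definition cosine_vector :: "'a::euclidean_space set \<Rightarrow> 'a \<Rightarrow> bool" where
  "cosine_vector S u \<longleftrightarrow> norm u = 1 \<and> cm_val S u = cosine_measure S"

definition gram_vector :: "'a::euclidean_space set \<Rightarrow> 'a \<Rightarrow> real \<Rightarrow> bool" where
  "gram_vector B u \<gamma> \<longleftrightarrow> norm u = 1 \<and> \<gamma> > 0 \<and> (\<forall>b\<in>B. u \<bullet> b = \<gamma>)"

end

theory Submission
  imports Defs
begin

theorem corollary1:
  fixes S :: "'a::euclidean_space set" and u :: 'a
  assumes "positive_spanning S"
    and "\<forall>d\<in>S. norm d = 1"
    and "cosine_vector S u"
  shows "\<exists>B\<subseteq>S. independent B \<and> span B = UNIV \<and> gram_vector B u (cosine_measure S)"
proof -
  have fin: "finite S" and ps: "pos_span S = UNIV" using assms(1) unfolding positive_spanning_def by auto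
  have nu: "norm u = 1" and cmu: "cm_val S u = cosine_measure S"
    using assms(3) unfolding cosine_vector_def by auto
  have n1: "\<And>d. d \<in> S \<Longrightarrow> norm d = 1" using assms(2) by auto
  define \<gamma> where "\<gamma> = cosine_measure S"
  have cmv: "\<And>v. cm_val S v = Max ((\<lambda>d. d \<bullet> v) ` S)"
    unfolding cm_val_def using n1 by (intro arg_cong[where f=Max] image_cong) auto
  have "u \<in> pos_span S" using ps by auto
  then obtain c where c0: "\<forall>d\<in>S. c d \<ge> 0" and uc: "u = (\<Sum>d\<in>S. c d *\<^sub>R d)"
    unfolding pos_span_def by auto
  have "1 = u \<bullet> u" using nu by (simp add: dot_square_norm)
  also have "\<dots> = (\<Sum>d\<in>S. c d * (d \<bullet> u))" by (subst (1) uc) (simp add: inner_sum_left)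
  finally have s1: "(\<Sum>d\<in>S. c d * (d \<bullet> u)) = 1" by simp
  have "\<exists>d\<in>S. d \<bullet> u > 0"
  proof (rule ccontr)
    assume "\<not> ?thesis"
    hence "\<forall>d\<in>S. c d * (d \<bullet> u) \<le> 0" using c0 by (simp add: mult_nonneg_nonpos not_less)
    hence "(\<Sum>d\<in>S. c d * (d \<bullet> u)) \<le> 0" by (intro sum_nonpos) auto
    with s1 show False by simp
  qed
  then obtain d0 where d0: "d0 \<in> S" "d0 \<bullet> u > 0" by auto
  have Sne: "S \<noteq> {}" using d0 by auto
  have ge: "\<And>d. d \<in> S \<Longrightarrow> d \<bullet> u \<le> \<gamma>"
    using cmu fin unfolding \<gamma>_def cmv by (metis Max_ge finite_imageI imageI)
  have gpos: "\<gamma> > 0" using ge[OF d0(1)] d0 by simp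
  have gu: "cm_val S u = \<gamma>" using cmu \<gamma>_def by simp
  have lower: "\<And>v. norm v = 1 \<Longrightarrow> \<gamma> \<le> cm_val S v"
  proof -
    fix v :: 'a assume v: "norm v = 1"
    have bdd: "bdd_below ((cm_val S) ` {u. norm u = 1})"
    proof (rule bdd_belowI2[where m="-1"])
      fix x :: 'a assume "x \<in> {u. norm u = 1}"
      hence x: "norm x = 1" by simp
      have "-1 \<le> d0 \<bullet> x"
        using Cauchy_Schwarz_ineq2[of d0 x] n1[OF d0(1)] x by (simp add: abs_le_iff)
      also have "\<dots> \<le> cm_val S x" unfolding cmv using fin d0(1) by (intro Max_ge) auto
      finally show "-1 \<le> cm_val S x" .
    qed
    show "\<gamma> \<le> cm_val S v" unfolding \<gamma>_def cosine_measure_def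
      by (rule cINF_lower[OF bdd]) (use v in auto)
  qed
  define A where "A = {d\<in>S. d \<bullet> u = \<gamma>}"
  have spanA: "span A = UNIV"
  proof (rule ccontr)
    assume "span A \<noteq> UNIV"
    then obtain w where w0: "w \<noteq> 0" and wA: "\<forall>x\<in>span A. w \<bullet> x = 0"
      using span_not_UNIV_orthogonal by blast
    define w' where "w' = (if u \<bullet> w \<ge> 0 then w else - w)"
    have w'0: "w' \<noteq> 0" using w0 by (simp add: w'_def)
    have uw: "u \<bullet> w' \<ge> 0" by (simp add: w'_def)
    have wA': "\<And>d. d \<in> A \<Longrightarrow> d \<bullet> w' = 0"
      using wA span_base by (fastforce simp: w'_def inner_commute)
    define v where "v = (\<lambda>t::real. u + t *\<^sub>R w')"
    have nv: "norm (v t) > 1" if "t > 0" for t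
    proof -
      have "(norm (v t))^2 = 1 + 2 * t * (u \<bullet> w') + t^2 * (norm w')^2"
      proof -
        have "(norm (v t))^2 = (u + t *\<^sub>R w') \<bullet> (u + t *\<^sub>R w')"
          unfolding v_def by (simp add: dot_square_norm)
        also have "\<dots> = u \<bullet> u + 2 * t * (u \<bullet> w') + t^2 * (w' \<bullet> w')"
          by (simp add: inner_add_left inner_add_right inner_commute algebra_simps power2_eq_square)
        finally show ?thesis using nu by (simp add: dot_square_norm)
      qed
      moreover have "t^2 * (norm w')^2 > 0" using that w'0 by simp
      moreover have "2 * t * (u \<bullet> w') \<ge> 0" using that uw by simp
      ultimately have "(norm (v t))^2 > 1^2" by simp
      thus ?thesis by (metis abs_norm_cancel power2_less_imp_less norm_ge_zero)
    qed
    have ev: "\<forall>\<^sub>F t in at_right 0. (d \<bullet> v t) / norm (v t) < \<gamma>" if d: "d \<in> S - A" for d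
    proof -
      have "((\<lambda>t. (d \<bullet> v t) / norm (v t)) \<longlongrightarrow> (d \<bullet> v 0) / norm (v 0)) (at_right 0)"
        unfolding v_def using nu
        by (intro tendsto_intros continuous_on_tendsto_compose) (auto intro!: tendsto_eq_intros)
      moreover have "(d \<bullet> v 0) / norm (v 0) < \<gamma>"
        using d ge[of d] nu unfolding v_def A_def by (auto simp: inner_commute)
      ultimately show ?thesis by (rule order_tendstoD)
    qed
    have "\<forall>\<^sub>F t in at_right 0. t > 0 \<and> (\<forall>d\<in>S - A. (d \<bullet> v t) / norm (v t) < \<gamma>)"
      using ev fin by (intro eventually_conj eventually_at_right_less eventually_ball_finite) auto
    then obtain t where t0: "t > 0" and tS: "\<forall>d\<in>S - A. (d \<bullet> v t) / norm (v t) < \<gamma>"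
      using eventually_happens'[OF trivial_limit_at_right_real] by blast
    define z where "z = v t /\<^sub>R norm (v t)"
    have nvt: "norm (v t) > 1" using nv t0 by simp
    have nz: "norm z = 1" using nvt unfolding z_def by (cases "v t = 0") (auto simp: field_simps)
    have all: "\<forall>d\<in>S. d \<bullet> z < \<gamma>"
    proof
      fix d assume d: "d \<in> S"
      have dz: "d \<bullet> z = (d \<bullet> v t) / norm (v t)" unfolding z_def by (simp add: divide_inverse mult.commute)
      show "d \<bullet> z < \<gamma>"
      proof (cases "d \<in> A")
        case True
        hence "d \<bullet> v t = \<gamma>" using wA'[OF True] unfolding v_def A_def by (simp add: inner_add_right inner_commute)
        hence "d \<bullet> z = \<gamma> / norm (v t)" using dz by simp
        also have "\<dots> < \<gamma>" using nvt gpos by (simp add: divide_less_eq)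
        finally show ?thesis .
      qed (use dz tS d in auto)
    qed
    have "cm_val S z < \<gamma>" unfolding cmv using fin Sne all by (subst Max_less_iff) auto
    with lower[OF nz] show False by simp
  qed
  obtain B where BA: "B \<subseteq> A" and iB: "independent B" and AB: "A \<subseteq> span B"
    using maximal_independent_subset by blast
  have "span B = UNIV" using AB spanA by (metis span_minimal subspace_span top.extremum_uniqueI)
  moreover have "gram_vector B u \<gamma>" unfolding gram_vector_def using nu gpos BA
    by (auto simp: A_def inner_commute)
  moreover have "B \<subseteq> S" using BA A_def by auto
  ultimately show ?thesis using iB \<gamma>_def by blast
qed

end
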